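(* Let $(X,d)$ be a metric space with $|X|=n$ whose distances are integers in $[0,\frac{16k}{\varepsilon}]$, for an integer $k\in[n]$ and $\varepsilon>0$. Then $\mathtt{detRecMSD}(X,k)$ runs in time $\left(O(\frac{k}{\varepsilon})\right)^k\cdot n^{O(1)}$.
   Context: $\operatorname{diam}(S)=\max_{p,q\in S}d(p,q)$, $\operatorname{Ball}(x,R)=\{z\in X:d(x,z)\le R\}$, and the cost of a collection of clusters is the sum of their diameters. The deterministic procedure $\mathtt{detRecMSD}(S,t)$ is: set $\mathcal{C}_i\gets\{S\}$ for all $i\in\{1,\dots,t\}$; if $t=1$ or $|S|=1$ return $(\mathcal{C}_1,\dots,\mathcal{C}_t)$. Otherwise let $x,y\in S$ with $d(x,y)=\operatorname{diam}(S)$; for each integer $R=0,1,\dots,\operatorname{diam}(S)-1$: let $S_1=S\cap\operatorname{Ball}(x,R)$, $S_2=S\setminus\operatorname{Ball}(x,R)$, compute $\mathcal{A}=\mathtt{detRecMSD}(S_1,t-1)$ and $\mathcal{B}=\mathtt{detRecMSD}(S_2,t-1)$, and for all $i,j\in\{1,\dots,t-1\}$ with $i+j\le t$, if $\operatorname{cost}(\mathcal{A}_i\cup\mathcal{B}_j)<\operatorname{cost}(\mathcal{C}_{i+j})$ set $\mathcal{C}_{i+j}\gets\mathcal{A}_i\cup\mathcal{B}_j$. Finally return $(\mathcal{C}_1,\dots,\mathcal{C}_t)$. *)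

theory Defs
  imports Complex_Main
begin

definition int_metric_on :: "'a set \<Rightarrow> ('a \<Rightarrow> 'a \<Rightarrow> int) \<Rightarrow> bool" where
  "int_metric_on X d \<longleftrightarrow>
     (\<forall>p\<in>X. \<forall>q\<in>X. 0 \<le> d p q \<and> (d p q = 0 \<longleftrightarrow> p = q) \<and> d p q = d q p) \<and>
     (\<forall>p\<in>X. \<forall>q\<in>X. \<forall>r\<in>X. d p r \<le> d p q + d q r)"

definition diam :: "('a \<Rightarrow> 'a \<Rightarrow> int) \<Rightarrow> 'a set \<Rightarrow> int" where
  "diam d S = Max {d p q | p q. p \<in> S \<and> q \<in> S}"

text \<open>A valid pivot rule: for every nonempty S within X, pick S is a point x of S
  such that some y in S has d x y = diam S (the point x of a diametral pair).\<close>
definition valid_pick :: "'a set \<Rightarrow> ('a \<Rightarrow> 'a \<Rightarrow> int) \<Rightarrow> ('a set \<Rightarrow> 'a) \<Rightarrow> bool" where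
  "valid_pick X d pick \<longleftrightarrow>
     (\<forall>S. S \<subseteq> X \<and> S \<noteq> {} \<longrightarrow> pick S \<in> S \<and> (\<exists>y\<in>S. d (pick S) y = diam d S))"

text \<open>Running time of detRecMSD(S,t) in a unit-cost model, following the recursion exactly.
  Base case (t = 1 or |S| <= 1): initialising C_1..C_t with {S} costs (t+1)(|S|+1).
  Otherwise: finding a diametral pair costs |S|^2; for each R = 0..diam(S)-1 we split S
  into S1 = S \<inter> Ball(x,R) and S2 = S - Ball(x,R), recurse on both with t-1, and perform
  the at most t^2 combination steps, each comparing costs (sums of diameters) of
  collections of clusters, which costs O(|S|^2) per step; we charge |S|^2 (t+1)^2
  per value of R.  The index t = 0 never arises from a call with k >= 1.\<close>
primrec msd_time :: "('a set \<Rightarrow> 'a) \<Rightarrow> ('a \<Rightarrow> 'a \<Rightarrow> int) \<Rightarrow> 'a set \<Rightarrow> nat \<Rightarrow> nat" where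
  "msd_time pick d S 0 = card S + 1"
| "msd_time pick d S (Suc t) =
     (if t = 0 \<or> card S \<le> 1 then (Suc t + 1) * (card S + 1)
      else card S ^ 2 +
        (\<Sum>R \<in> {0..<nat (diam d S)}.
            card S ^ 2 * (Suc t + 1) ^ 2
          + msd_time pick d {z \<in> S. d (pick S) z \<le> int R} t
          + msd_time pick d {z \<in> S. \<not> d (pick S) z \<le> int R} t))"

end

theory Submission
  imports Defs
begin

lemma diam_props:
  assumes "finite X" "S \<subseteq> X" "S \<noteq> {}" "\<forall>p\<in>X. \<forall>q\<in>X. d p q \<le> int L"
  shows "diam d S \<le> int L"
proof -
  have fin: "finite {d p q | p q. p \<in> S \<and> q \<in> S}"
    using assms(1,2) finite_subset[of S X] by (auto intro: finite_image_set2)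
  have ne: "{d p q | p q. p \<in> S \<and> q \<in> S} \<noteq> {}" using assms(3) by auto
  show ?thesis unfolding diam_def using Max_in[OF fin ne] assms(2,4) by fastforce
qed

lemma main:
  fixes X :: "'a set" and d pick and L k :: nat
  assumes fX: "finite X" and vp: "valid_pick X d pick" and met: "int_metric_on X d"
    and bd: "\<forall>p\<in>X. \<forall>q\<in>X. d p q \<le> int L"
  shows "Suc t \<le> k \<Longrightarrow> S \<subseteq> X \<Longrightarrow> S \<noteq> {} \<Longrightarrow>
    msd_time pick d S (Suc t) \<le> 2 * (card X + 1)^2 * (k+1)^2 * (4*L+4)^t"
proof (induction t arbitrary: S)
  case 0
  have "card S \<le> card X" using card_mono[OF fX 0(2)] .
  then have "2 * (card S + 1) \<le> 2 * (card X + 1)^2 * (k+1)^2"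
    by (simp add: power2_eq_square)
  then show ?case by simp
next
  case (Suc t)
  define n where "n = card X"
  define Q where "Q = 2 * (n + 1)^2 * (k+1)^2"
  have cS: "card S \<le> n" unfolding n_def using card_mono[OF fX Suc(3)] .
  show ?case
  proof (cases "card S \<le> 1")
    case True
    have "(Suc (Suc t) + 1) * (card S + 1) \<le> (k+1) * (n+1)"
      using Suc(2) cS by (intro mult_mono) auto
    also have "\<dots> \<le> Q" unfolding Q_def power2_eq_square
      by (simp add: algebra_simps)
    also have "\<dots> \<le> Q * (4*L+4)^(Suc t)" by simp
    finally show ?thesis using True unfolding Q_def n_def by simp
  next
    case False
    define x where "x = pick S"
    have px: "x \<in> S" and ey: "\<exists>y\<in>S. d x y = diam d S"
      using vp Suc(3,4) unfolding valid_pick_def x_def by auto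
    have dS: "diam d S \<le> int L" using diam_props[OF fX Suc(3,4) bd] .
    have IH: "msd_time pick d T (Suc t) \<le> Q * (4*L+4)^t" if "T \<subseteq> S" "T \<noteq> {}" for T
      using Suc.IH[of T] Suc(2,3) that unfolding Q_def n_def by auto
    have hterm: "card S ^ 2 * (Suc (Suc t) + 1) ^ 2
          + msd_time pick d {z \<in> S. d (pick S) z \<le> int R} (Suc t)
          + msd_time pick d {z \<in> S. \<not> d (pick S) z \<le> int R} (Suc t)
       \<le> n^2 * (k+1)^2 + 2 * (Q * (4*L+4)^t)"
      if R: "R \<in> {0..<nat (diam d S)}" for R
    proof -
      have "x \<in> X" using px Suc(3) by auto
      then have "d x x = 0" using met unfolding int_metric_on_def by auto
      then have n1: "{z \<in> S. d (pick S) z \<le> int R} \<noteq> {}" using px x_def by force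
      obtain y where y: "y \<in> S" "d x y = diam d S" using ey by auto
      have "int R < diam d S" using R by auto
      then have n2: "{z \<in> S. \<not> d (pick S) z \<le> int R} \<noteq> {}" using y x_def by force
      have a: "card S ^ 2 * (Suc (Suc t) + 1) ^ 2 \<le> n^2 * (k+1)^2"
        using cS Suc(2) by (intro mult_mono power_mono) auto
      show ?thesis using a IH[OF _ n1] IH[OF _ n2] by auto
    qed
    have "msd_time pick d S (Suc (Suc t)) = card S ^ 2 +
        (\<Sum>R \<in> {0..<nat (diam d S)}.
            card S ^ 2 * (Suc (Suc t) + 1) ^ 2
          + msd_time pick d {z \<in> S. d (pick S) z \<le> int R} (Suc t)
          + msd_time pick d {z \<in> S. \<not> d (pick S) z \<le> int R} (Suc t))"
      using False by simp
    also have "\<dots> \<le> n^2 + (\<Sum>R \<in> {0..<nat (diam d S)}. n^2 * (k+1)^2 + 2 * (Q * (4*L+4)^t))"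
      proof (rule add_mono)
        show "card S ^ 2 \<le> n ^ 2" using cS by (rule power_mono) simp
      qed (rule sum_mono, rule hterm)
    also have "\<dots> = n^2 + nat (diam d S) * (n^2 * (k+1)^2 + 2 * (Q * (4*L+4)^t))" by simp
    also have "\<dots> \<le> n^2 + L * (n^2 * (k+1)^2 + 2 * (Q * (4*L+4)^t))"
      using dS by (intro add_mono mult_right_mono) auto
    also have "\<dots> \<le> Q * (4*L+4)^Suc t"
    proof -
      define P where "P = (4*L+4)^t"
      have P1: "1 \<le> P" unfolding P_def by simp
      have h1: "n^2 \<le> Q" unfolding Q_def by (simp add: power2_eq_square)
      have "n^2 \<le> 2*(n+1)^2" by (simp add: power2_eq_square)
      then have h2: "n^2 * (k+1)^2 \<le> Q" unfolding Q_def by (rule mult_right_mono) simp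
      have "n^2 + L * (n^2 * (k+1)^2 + 2 * (Q * P)) \<le> Q + L * (Q + 2*(Q*P))"
        using h1 h2 by (intro add_mono mult_left_mono) auto
      also have "\<dots> \<le> Q * P + L * (Q * P + 2*(Q*P))"
        using P1 by (intro add_mono mult_left_mono) auto
      also have "\<dots> \<le> Q * P * (4*L+4)" by (simp add: algebra_simps)
      finally show ?thesis unfolding P_def by (simp add: algebra_simps)
    qed
    finally show ?thesis unfolding Q_def n_def .
  qed
qed

theorem lemma6:
  shows "\<exists>c::real. c > 0 \<and> (\<exists>b::nat.
     \<forall>(X::nat set) (d::nat \<Rightarrow> nat \<Rightarrow> int) pick (k::nat) (\<epsilon>::real).
       finite X \<longrightarrow> int_metric_on X d \<longrightarrow> valid_pick X d pick \<longrightarrow>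
       1 \<le> k \<longrightarrow> k \<le> card X \<longrightarrow> \<epsilon> > 0 \<longrightarrow>
       (\<forall>p\<in>X. \<forall>q\<in>X. real_of_int (d p q) \<le> 16 * real k / \<epsilon>) \<longrightarrow>
       real (msd_time pick d X k) \<le> (c * real k / \<epsilon>) ^ k * real (card X) ^ b + c)"
proof (intro exI conjI allI impI)
  show "(4096::real) > 0" by simp
  fix X :: "nat set" and d :: "nat \<Rightarrow> nat \<Rightarrow> int" and pick and k :: nat and \<epsilon> :: real
  assume fX: "finite X" and met: "int_metric_on X d" and vp: "valid_pick X d pick"
    and k1: "1 \<le> k" and kn: "k \<le> card X" and ep: "\<epsilon> > 0"
    and db: "\<forall>p\<in>X. \<forall>q\<in>X. real_of_int (d p q) \<le> 16 * real k / \<epsilon>"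
  define n where "n = card X"
  have nn: "0 \<le> (4096 * real k / \<epsilon>) ^ k * real n ^ 4" using ep by simp
  show "real (msd_time pick d X k) \<le> (4096 * real k / \<epsilon>) ^ k * real (card X) ^ 4 + 4096"
  proof (cases "n \<le> 1")
    case True
    then have "k = 1" "n = 1" using k1 kn n_def by auto
    then have "msd_time pick d X k = (Suc 0 + 1) * (card X + 1)" by simp
    then have "msd_time pick d X k = 4" using \<open>n = 1\<close> n_def by simp
    then show ?thesis using nn n_def by simp
  next
    case False
    then obtain p q where pq: "p \<in> X" "q \<in> X" "p \<noteq> q"
    proof -
      have "\<not> card X \<le> Suc 0" using False n_def by simp
      then have "\<not> (\<forall>x\<in>X. \<forall>y\<in>X. x = y)" using card_le_Suc0_iff_eq[OF fX] by simp
      then show ?thesis using that by blast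
    qed
    then have "d p q \<noteq> 0" using met unfolding int_metric_on_def by auto
    moreover have "d p q \<ge> 0" using met pq unfolding int_metric_on_def by auto
    ultimately have "1 \<le> d p q" by simp
    then have "real_of_int 1 \<le> real_of_int (d p q)" by (simp only: of_int_le_iff)
    then have one: "1 \<le> 16 * real k / \<epsilon>" using db pq by fastforce
    define L where "L = nat \<lfloor>16 * real k / \<epsilon>\<rfloor>"
    have L1: "1 \<le> L" using one unfolding L_def by linarith
    have Lr: "real L \<le> 16 * real k / \<epsilon>" unfolding L_def using one by linarith
    have bd: "\<forall>p\<in>X. \<forall>q\<in>X. d p q \<le> int L"
    proof (intro ballI)
      fix p q assume "p \<in> X" "q \<in> X"
      then have "real_of_int (d p q) \<le> 16 * real k / \<epsilon>" using db by auto
      then have "d p q \<le> \<lfloor>16 * real k / \<epsilon>\<rfloor>" by linarith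
      then show "d p q \<le> int L" unfolding L_def by linarith
    qed
    obtain t where kt: "k = Suc t" using k1 by (cases k) auto
    have "X \<noteq> {}" using pq by auto
    have M: "msd_time pick d X k \<le> 2 * (n + 1)^2 * (k+1)^2 * (4*L+4)^t"
      using main[OF fX vp met bd, of t k X] kt \<open>X \<noteq> {}\<close> n_def by simp
    define a where "a = 128 * real k / \<epsilon>"
    have a8: "8 \<le> a" using one unfolding a_def by simp
    have La: "real (4*L+4) \<le> a" using L1 Lr unfolding a_def by simp
    have "real (msd_time pick d X k) \<le> 2 * (real n + 1)^2 * (real k+1)^2 * real (4*L+4)^t"
    proof -
      have "real (msd_time pick d X k) \<le> real (2 * (n + 1)^2 * (k+1)^2 * (4*L+4)^t)"
        using M by (simp only: of_nat_le_iff)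
      then show ?thesis by (simp add: add.commute)
    qed
    also have "\<dots> \<le> 2 * (2 * real n)^2 * (2 * real n)^2 * a^k"
    proof (intro mult_mono power_mono)
      show "real n + 1 \<le> 2 * real n" using False by simp
      show "real k + 1 \<le> 2 * real n" using kn k1 n_def by simp
      have "real (4*L+4)^t \<le> a^t" using La by (intro power_mono) auto
      also have "\<dots> \<le> a^k" using a8 kt by (intro power_increasing) auto
      finally show "real (4*L+4)^t \<le> a^k" .
    qed (use a8 in auto)
    also have "\<dots> = 32 * a^k * real n ^ 4" by (simp add: power2_eq_square power4_eq_xxxx)
    also have "\<dots> \<le> 32^k * a^k * real n ^ 4"
    proof -
      have "(32::real) ^ 1 \<le> 32^k" using k1 by (rule power_increasing) auto
      moreover have "0 \<le> a^k" using a8 by simp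
      ultimately show ?thesis by (intro mult_right_mono) auto
    qed
    also have "\<dots> = (4096 * real k / \<epsilon>) ^ k * real n ^ 4"
      unfolding a_def by (simp add: power_mult_distrib[symmetric])
    finally show ?thesis using n_def by simp
  qed
qed

end
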